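(* Let $L\ge 18$ be even. Then \[ M_S(L,3)\le\begin{cases}\lfloor (L+4)/8\rfloor & \text{if } L\equiv 0 \pmod{12},\\ \lfloor (L+2)/8\rfloor & \text{if } L\equiv 4,6,8 \pmod{12},\\ \lfloor L/8\rfloor & \text{if } L\equiv 2,10 \pmod{12}.\end{cases} \]
   Context: $\mathcal{P}(L,\omega)$ is the set of $\omega$-element subsets of $\mathbb{Z}_L$. For $\mathcal{I}\in\mathcal{P}(L,\omega)$: $d(\mathcal{I})=\{a-b \bmod L: a,b\in\mathcal{I}\}$, $d^*(\mathcal{I})=d(\mathcal{I})\setminus\{0\}$. A strongly conflict-avoiding code (SCAC) of length $L$ and weight $\omega$ is a set $\mathcal{C}=\{\mathcal{I}_1,\dots,\mathcal{I}_M\}\subseteq\mathcal{P}(L,\omega)$ such that for all $j\ne k$, $\big(d^*(\mathcal{I}_j)\cup(d^*(\mathcal{I}_j)+1)\cup(d^*(\mathcal{I}_j)-1)\big)\cap d(\mathcal{I}_k)=\emptyset$ (shifts mod $L$). $M_S(L,\omega)$ denotes the maximum number of codewords in an SCAC of length $L$ and weight $\omega$. *)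

theory Defs
  imports Main
begin

text \<open>Z_L is represented by {0..<L} :: nat set with arithmetic modulo L.\<close>

definition P_set :: "nat \<Rightarrow> nat \<Rightarrow> nat set set" where
  "P_set L w = {I. I \<subseteq> {0..<L} \<and> card I = w}"

definition dset :: "nat \<Rightarrow> nat set \<Rightarrow> nat set" where
  "dset L I = {(a + L - b) mod L | a b. a \<in> I \<and> b \<in> I}"

definition dstar :: "nat \<Rightarrow> nat set \<Rightarrow> nat set" where
  "dstar L I = dset L I - {0}"

definition shift_closure :: "nat \<Rightarrow> nat set \<Rightarrow> nat set" where
  "shift_closure L D = D \<union> ((\<lambda>x. (x + 1) mod L) ` D) \<union> ((\<lambda>x. (x + L - 1) mod L) ` D)"

definition is_SCAC :: "nat \<Rightarrow> nat \<Rightarrow> nat set set \<Rightarrow> bool" where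
  "is_SCAC L w C \<longleftrightarrow> C \<subseteq> P_set L w \<and>
     (\<forall>I\<in>C. \<forall>J\<in>C. I \<noteq> J \<longrightarrow> shift_closure L (dstar L I) \<inter> dset L J = {})"

definition M_S :: "nat \<Rightarrow> nat \<Rightarrow> nat" where
  "M_S L w = Max {card C | C. is_SCAC L w C}"

end

theory Submission
  imports Defs
begin


definition good :: "nat \<Rightarrow> nat set \<Rightarrow> bool" where
 "good L X \<longleftrightarrow> 8 \<le> card X \<or> (L div 3 \<in> X \<and> (if 3 dvd L then 4 else 6) \<le> card X)
    \<or> (4 dvd L \<and> L div 4 \<in> X \<and> 6 \<le> card X)"

lemma card_ge: "F \<subseteq> X \<Longrightarrow> finite X \<Longrightarrow> card F = n \<Longrightarrow> n \<le> card X"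
  using card_mono by blast

lemma sorted_case:
  assumes "2 \<le> p" "p \<le> q" "q \<le> r" "L = p+q+r" "even L"
  shows "good L ({p,q,r,L-p,L-q,L-r} \<union> Suc ` {p,q,r,L-p,L-q,L-r})"
proof -
  define X where "X = {p,q,r,L-p,L-q,L-r} \<union> Suc ` {p,q,r,L-p,L-q,L-r}"
  have X: "X = {p,q,r,q+r,p+r,p+q,p+1,q+1,r+1,q+r+1,p+r+1,p+q+1}"
    unfolding X_def using assms by auto
  have fin: "finite X" unfolding X by simp
  have "good L X"
  proof (cases "p = q")
    case pq: True
    show ?thesis
    proof (cases "q = r")
      case True
      have "{p,p+1,2*p,2*p+1} \<subseteq> X" unfolding X using pq True by auto
      moreover have "card {p,p+1,2*p,2*p+1} = 4" using assms by simp
      ultimately have "4 \<le> card X" using card_ge fin by blast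
      moreover have "L div 3 = p" "3 dvd L" using assms pq True by presburger+
      ultimately show ?thesis unfolding good_def X by auto
    next
      case qr: False
      show ?thesis
      proof (cases "r = 2*p")
        case True
        have "{p,p+1,2*p,2*p+1,3*p,3*p+1} \<subseteq> X" unfolding X using pq True by auto
        moreover have "card {p,p+1,2*p,2*p+1,3*p,3*p+1} = 6" using assms by simp
        ultimately have "6 \<le> card X" using card_ge fin by blast
        moreover have "L div 4 = p" "4 dvd L" using assms pq True by presburger+
        ultimately show ?thesis unfolding good_def X by auto
      next
        case r2: False
        show ?thesis
        proof (cases "r = p+1")
          case True
          have "{p,p+1,p+2,2*p,2*p+1,2*p+2} \<subseteq> X" unfolding X using pq True by auto
          moreover have "odd p" using assms pq True by auto
          then have "p \<ge> 3" using assms(1) by (cases "p = 2") auto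
          then have "card {p,p+1,p+2,2*p,2*p+1,2*p+2} = 6" by simp
          ultimately have "6 \<le> card X" using card_ge fin by blast
          moreover have "L div 3 = p" "\<not> 3 dvd L" using assms pq True by presburger+
          ultimately show ?thesis unfolding good_def X by auto
        next
          case False
          have "even r" using assms pq by auto
          then have "r \<noteq> 2*p+1" "r \<noteq> 2*p - 1" using assms by auto
          have "{p,p+1,2*p,2*p+1,r,r+1,p+r,p+r+1} \<subseteq> X" unfolding X using pq by auto
          moreover have "card {p,p+1,2*p,2*p+1,r,r+1,p+r,p+r+1} = 8"
            using assms pq qr r2 False \<open>r \<noteq> 2*p+1\<close> \<open>r \<noteq> 2*p - 1\<close> by simp
          ultimately have "8 \<le> card X" using card_ge fin by blast
          then show ?thesis unfolding good_def by auto
        qed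
      qed
    qed
  next
    case pq: False
    show ?thesis
    proof (cases "q = r")
      case True
      show ?thesis
      proof (cases "q = p+1")
        case q1: True
        have "{p,p+1,p+2,2*p+1,2*p+2,2*p+3} \<subseteq> X" unfolding X using q1 True by auto
        moreover have "card {p,p+1,p+2,2*p+1,2*p+2,2*p+3} = 6" using assms by simp
        ultimately have "6 \<le> card X" using card_ge fin by blast
        moreover have "L div 3 = p" "\<not> 3 dvd L" using assms q1 True by presburger+
        ultimately show ?thesis unfolding good_def X by auto
      next
        case False
        have "{p,p+1,q,q+1,2*q,2*q+1,p+q,p+q+1} \<subseteq> X" unfolding X using True by auto
        moreover have "card {p,p+1,q,q+1,2*q,2*q+1,p+q,p+q+1} = 8"
          using assms pq False by simp
        ultimately have "8 \<le> card X" using card_ge fin by blast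
        then show ?thesis unfolding good_def by auto
      qed
    next
      case qr: False
      show ?thesis
      proof (cases "r = p + q")
        case rpq: True
        show ?thesis
        proof (cases "q = p+1")
          case True
          have "{p,p+1,p+2,2*p+1,2*p+2,3*p+1,3*p+2,3*p+3} \<subseteq> X" unfolding X using rpq True by auto
          moreover have "card {p,p+1,p+2,2*p+1,2*p+2,3*p+1,3*p+2,3*p+3} = 8" using assms by simp
          ultimately have "8 \<le> card X" using card_ge fin by blast
          then show ?thesis unfolding good_def by auto
        next
          case False
          have "{p,p+1,q,q+1,p+q,p+q+1,2*p+q,p+2*q} \<subseteq> X" unfolding X using rpq by auto
          moreover have "card {p,p+1,q,q+1,p+q,p+q+1,2*p+q,p+2*q} = 8" using assms pq False by simp
          ultimately have "8 \<le> card X" using card_ge fin by blast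
          then show ?thesis unfolding good_def by auto
        qed
      next
        case rpq: False
        show ?thesis
        proof (cases "q = p+1")
          case q1: False
          have "{p,q,r,q+r,p+r,p+q,p+1,q+r+1} \<subseteq> X" unfolding X by auto
          moreover have "card {p,q,r,q+r,p+r,p+q,p+1,q+r+1} = 8" using assms pq qr rpq q1 by simp
          ultimately have "8 \<le> card X" using card_ge fin by blast
          then show ?thesis unfolding good_def by auto
        next
          case q1: True
          show ?thesis
          proof (cases "r = p+2")
            case False
            have "{p,q,r,q+r,p+r,p+q,q+1,q+r+1} \<subseteq> X" unfolding X by auto
            moreover have "card {p,q,r,q+r,p+r,p+q,q+1,q+r+1} = 8" using assms pq qr rpq q1 False by simp
            ultimately have "8 \<le> card X" using card_ge fin by blast
            then show ?thesis unfolding good_def by auto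
          next
            case True
            have "odd p" using assms q1 True by auto
            then have "p \<ge> 3" using assms(1) by (cases "p = 2") auto
            have "{p,q,r,q+r,p+r,p+q,r+1,q+r+1} \<subseteq> X" unfolding X by auto
            moreover have "card {p,q,r,q+r,p+r,p+q,r+1,q+r+1} = 8" using \<open>p \<ge> 3\<close> q1 True by simp
            ultimately have "8 \<le> card X" using card_ge fin by blast
            then show ?thesis unfolding good_def by auto
          qed
        qed
      qed
    qed
  qed
  then show ?thesis unfolding X_def .
qed

lemma gen_case:
  assumes "2 \<le> p" "2 \<le> q" "2 \<le> r" "L = p+q+r" "even L"
  shows "good L ({p,q,r,L-p,L-q,L-r} \<union> Suc ` {p,q,r,L-p,L-q,L-r})"
proof -
  have "p \<le> q \<and> q \<le> r \<or> p \<le> r \<and> r \<le> q \<or> q \<le> p \<and> p \<le> r \<or> q \<le> r \<and> r \<le> p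
    \<or> r \<le> p \<and> p \<le> q \<or> r \<le> q \<and> q \<le> p" by linarith
  then show ?thesis
  proof (elim disjE conjE)
    assume "p \<le> q" "q \<le> r" thus ?thesis using sorted_case[of p q r L] assms by simp
  next
    assume "p \<le> r" "r \<le> q" thus ?thesis using sorted_case[of p r q L] assms
      by (simp add: insert_commute add.commute add.left_commute)
  next
    assume "q \<le> p" "p \<le> r" thus ?thesis using sorted_case[of q p r L] assms
      by (simp add: insert_commute add.commute add.left_commute)
  next
    assume "q \<le> r" "r \<le> p" thus ?thesis using sorted_case[of q r p L] assms
      by (simp add: insert_commute add.commute add.left_commute)
  next
    assume "r \<le> p" "p \<le> q" thus ?thesis using sorted_case[of r p q L] assms
      by (simp add: insert_commute add.commute add.left_commute)
  next
    assume "r \<le> q" "q \<le> p" thus ?thesis using sorted_case[of r q p L] assms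
      by (simp add: insert_commute add.commute add.left_commute)
  qed
qed

lemma modsub: "(a::nat) < L \<Longrightarrow> b < L \<Longrightarrow> (a + L - b) mod L = (if b \<le> a then a - b else a + L - b)"
proof (cases "b \<le> a")
  case True
  assume "a < L" "b < L"
  then have "a + L - b = (a - b) + L" using True by linarith
  then have "(a + L - b) mod L = (a - b) mod L" by simp
  then show ?thesis using True \<open>a < L\<close> by simp
next
  case False
  assume "a < L" "b < L"
  then show ?thesis using False by simp
qed

lemma dset3:
  assumes "x < y" "y < z" "z < (L::nat)"
  shows "dset L {x,y,z} = {0, y-x, z-y, L-(z-x), L-(y-x), L-(z-y), z-x}"
proof (rule set_eqI, rule iffI)
  fix d assume "d \<in> dset L {x,y,z}"
  then obtain a b where ab: "a \<in> {x,y,z}" "b \<in> {x,y,z}" "d = (a + L - b) mod L"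
    unfolding dset_def by blast
  have lt: "x < L" "y < L" "z < L" using assms by auto
  from ab show "d \<in> {0, y-x, z-y, L-(z-x), L-(y-x), L-(z-y), z-x}"
    apply (elim insertE emptyE)
    using assms lt by (simp_all add: modsub) (simp_all add: add.commute)
next
  fix d assume d: "d \<in> {0, y-x, z-y, L-(z-x), L-(y-x), L-(z-y), z-x}"
  have lt: "x < L" "y < L" "z < L" using assms by auto
  have e: "\<And>a b. a \<in> {x,y,z} \<Longrightarrow> b \<in> {x,y,z} \<Longrightarrow> (a + L - b) mod L \<in> dset L {x,y,z}"
    unfolding dset_def by blast
  from d show "d \<in> dset L {x,y,z}"
  proof (elim insertE emptyE)
    assume "d = 0" thus ?thesis using e[of x x] by simp
  next
    assume "d = y - x" thus ?thesis using e[of y x] assms lt by (simp add: modsub; simp add: add.commute)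
  next
    assume "d = z - y" thus ?thesis using e[of z y] assms lt by (simp add: modsub; simp add: add.commute)
  next
    assume "d = L - (z - x)" thus ?thesis using e[of x z] assms lt by (simp add: modsub; simp add: add.commute)
  next
    assume "d = L - (y - x)" thus ?thesis using e[of x y] assms lt by (simp add: modsub; simp add: add.commute)
  next
    assume "d = L - (z - y)" thus ?thesis using e[of y z] assms lt by (simp add: modsub; simp add: add.commute)
  next
    assume "d = z - x" thus ?thesis using e[of z x] assms lt by (simp add: modsub; simp add: add.commute)
  qed
qed

lemma dstar3:
  assumes "x < y" "y < z" "z < L"
  shows "dstar L {x,y,z} = {y-x, z-y, L-(z-x), L-(y-x), L-(z-y), z-x}"
  using assms unfolding dstar_def dset3[OF assms] by auto

lemma sort3:
  fixes x y z :: nat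
  assumes "x \<noteq> y" "y \<noteq> z" "x \<noteq> z"
  shows "\<exists>a b c. a < b \<and> b < c \<and> {x,y,z} = {a,b,c}"
proof -
  have "x<y \<and> y<z \<or> x<z \<and> z<y \<or> y<x \<and> x<z \<or> y<z \<and> z<x \<or> z<x \<and> x<y \<or> z<y \<and> y<x"
    using assms by linarith
  then show ?thesis
  proof (elim disjE conjE)
    assume "x<y" "y<z" thus ?thesis by blast
  next
    assume "x<z" "z<y" thus ?thesis by (intro exI[of _ x] exI[of _ z] exI[of _ y]) auto
  next
    assume "y<x" "x<z" thus ?thesis by (intro exI[of _ y] exI[of _ x] exI[of _ z]) auto
  next
    assume "y<z" "z<x" thus ?thesis by (intro exI[of _ y] exI[of _ z] exI[of _ x]) auto
  next
    assume "z<x" "x<y" thus ?thesis by (intro exI[of _ z] exI[of _ x] exI[of _ y]) auto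
  next
    assume "z<y" "y<x" thus ?thesis by (intro exI[of _ z] exI[of _ y] exI[of _ x]) auto
  qed
qed

lemma codeword:
  assumes "I \<subseteq> {0..<L}" "card I = 3" "1 \<notin> dstar L I"
  shows "\<exists>p q r. 2\<le>p \<and> 2\<le>q \<and> 2\<le>r \<and> p+q+r = L \<and> dstar L I = {p,q,r,L-p,L-q,L-r}"
proof -
  obtain x y z where xyz: "x \<noteq> y" "x \<noteq> z" "y \<noteq> z" "I = {x,y,z}"
    using card_3_iff[THEN iffD1, OF assms(2)] by blast
  obtain a b c where abc0: "a<b" "b<c" "{x,y,z} = {a,b,c}"
    using sort3[OF xyz(1) xyz(3) xyz(2)] by blast
  have I: "I = {a,b,c}" using xyz(4) abc0(3) by simp
  have "c \<in> I" unfolding I by simp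
  then have cL: "c < L" using assms(1) by auto
  define p where "p = b - a"
  define q where "q = c - b"
  define r where "r = L - (c - a)"
  have A: "dstar L I = {p,q,r,L-p,L-q,c-a}"
    unfolding I p_def q_def r_def by (rule dstar3[OF abc0(1,2) cL])
  have B: "c - a = L - r" unfolding r_def using abc0 cL by simp
  have D: "dstar L I = {p,q,r,L-p,L-q,L-r}" using A B by (simp only:)
  have "p \<in> dstar L I" "q \<in> dstar L I" "r \<in> dstar L I" unfolding D by simp_all
  then have "p \<noteq> 1" "q \<noteq> 1" "r \<noteq> 1" using assms(3) by metis+
  moreover have "p \<ge> 1" "q \<ge> 1" "r \<ge> 1" "p+q+r = L"
    using abc0(1,2) cL unfolding p_def q_def r_def by auto
  ultimately have "2\<le>p" "2\<le>q" "2\<le>r" "p+q+r = L" by simp_all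
  then show ?thesis using D by blast
qed

lemma final_arith:
  assumes "even (L::nat)" "18 \<le> L" "8 * c \<le> L - 2 + (if 3 dvd L then 4 else 2) + (if 4 dvd L then 2 else 0)"
  shows "c \<le> (if L mod 12 = 0 then (L + 4) div 8
                      else if L mod 12 \<in> {4, 6, 8} then (L + 2) div 8
                      else L div 8)"
proof -
  have le: "\<And>n. 8 * c \<le> n \<Longrightarrow> c \<le> n div 8" by linarith
  have m: "L mod 12 = 0 \<or> L mod 12 = 2 \<or> L mod 12 = 4 \<or> L mod 12 = 6 \<or> L mod 12 = 8 \<or> L mod 12 = 10"
    using assms(1) by presburger
  show ?thesis
  proof (rule disjE[OF m])
    assume h: "L mod 12 = 0"
    then have "3 dvd L" "4 dvd L" by presburger+
    then show ?thesis using h assms(2,3) le by simp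
  next
    assume "L mod 12 = 2 \<or> L mod 12 = 4 \<or> L mod 12 = 6 \<or> L mod 12 = 8 \<or> L mod 12 = 10"
    then show ?thesis
    proof (elim disjE)
      assume h: "L mod 12 = 2"
      then have "\<not> 3 dvd L" "\<not> 4 dvd L" by presburger+
      then show ?thesis using h assms(2,3) le by simp
    next
      assume h: "L mod 12 = 4"
      then have "\<not> 3 dvd L" "4 dvd L" by presburger+
      then show ?thesis using h assms(2,3) le by simp
    next
      assume h: "L mod 12 = 6"
      then have "3 dvd L" "\<not> 4 dvd L" by presburger+
      then show ?thesis using h assms(2,3) le by simp
    next
      assume h: "L mod 12 = 8"
      then have "\<not> 3 dvd L" "4 dvd L" by presburger+
      then show ?thesis using h assms(2,3) le by simp
    next
      assume h: "L mod 12 = 10"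
      then have "\<not> 3 dvd L" "\<not> 4 dvd L" by presburger+
      then show ?thesis using h assms(2,3) le by simp
    qed
  qed
qed

lemma sum_ind: "finite C \<Longrightarrow> A \<subseteq> C \<Longrightarrow> (\<Sum>I\<in>C. if I \<in> A then (k::nat) else 0) = k * card A"
proof -
  assume "finite C" "A \<subseteq> C"
  then have "(\<Sum>I\<in>C. if I \<in> A then k else 0) = (\<Sum>I\<in>C \<inter> A. k)"
    using sum.inter_restrict[OF \<open>finite C\<close>, of "\<lambda>_. k" A] by (simp only:)
  also have "C \<inter> A = A" using \<open>A \<subseteq> C\<close> by blast
  finally show ?thesis by (simp add: mult.commute)
qed

theorem mainTheorem6:
  fixes L :: nat
  assumes "L \<ge> 18" and "even L"
  shows "M_S L 3 \<le> (if L mod 12 = 0 then (L + 4) div 8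
                      else if L mod 12 \<in> {4, 6, 8} then (L + 2) div 8
                      else L div 8)"
proof -
  define b where "b = (if L mod 12 = 0 then (L + 4) div 8
                      else if L mod 12 \<in> {4, 6, 8} then (L + 2) div 8
                      else L div 8)"
  have b2: "2 \<le> b" unfolding b_def using assms(1) by auto
  have key: "card C \<le> b" if SC: "is_SCAC L 3 C" for C
  proof -
    have sub: "C \<subseteq> P_set L 3" and cond: "\<And>I J. I \<in> C \<Longrightarrow> J \<in> C \<Longrightarrow> I \<noteq> J \<Longrightarrow>
        shift_closure L (dstar L I) \<inter> dset L J = {}"
      using SC unfolding is_SCAC_def by auto
    have finC: "finite C"
      by (rule finite_subset[of _ "Pow {0..<L}"]) (use sub in \<open>auto simp: P_set_def\<close>)
    have memP: "\<And>I. I \<in> C \<Longrightarrow> I \<subseteq> {0..<L} \<and> card I = 3" using sub unfolding P_set_def by auto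
    show ?thesis
    proof (cases "card C \<le> 1")
      case True then show ?thesis using b2 by simp
    next
      case False
      have other: "\<exists>J\<in>C. J \<noteq> I" if "I \<in> C" for I
      proof (rule ccontr)
        assume "\<not> (\<exists>J\<in>C. J \<noteq> I)"
        then have "C \<subseteq> {I}" by blast
        then have "card C \<le> 1" using card_mono[of "{I}" C] by simp
        with False show False by simp
      qed
      have one: "1 \<notin> dstar L I" if IC: "I \<in> C" for I
      proof
        assume h: "1 \<in> dstar L I"
        obtain J where J: "J \<in> C" "J \<noteq> I" using other[OF IC] by blast
        have "card J = 3" using memP[OF J(1)] by simp
        then have "J \<noteq> {}" by auto
        then obtain j where "j \<in> J" by blast
        then have "(j + L - j) mod L \<in> dset L J" unfolding dset_def by blast
        then have "0 \<in> dset L J" by simp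
        moreover have "(1 + L - 1) mod L \<in> shift_closure L (dstar L I)"
          unfolding shift_closure_def using h by blast
        then have "0 \<in> shift_closure L (dstar L I)" by simp
        ultimately show False using cond[OF IC J(1) J(2)[symmetric]] by blast
      qed
      have gaps: "\<exists>p q r. 2\<le>p \<and> 2\<le>q \<and> 2\<le>r \<and> p+q+r = L \<and> dstar L I = {p,q,r,L-p,L-q,L-r}"
        if "I \<in> C" for I
        using codeword[of I L] memP[OF that] one[OF that] by blast
      define T where "T I = dstar L I \<union> Suc ` dstar L I" for I
      have goodT: "good L (T I)" if IC: "I \<in> C" for I
      proof -
        obtain p q r where h: "2\<le>p" "2\<le>q" "2\<le>r" "p+q+r = L" "dstar L I = {p,q,r,L-p,L-q,L-r}"
          using gaps[OF IC] by blast
        show ?thesis unfolding T_def h(5) using gen_case[OF h(1-3) h(4)[symmetric] assms(2)] .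
      qed
      have Drange: "dstar L I \<subseteq> {2..L-2}" if "I \<in> C" for I
        using gaps[OF that] by auto
      have Tsub: "T I \<subseteq> {2..<L}" if "I \<in> C" for I
        using Drange[OF that] assms(1) unfolding T_def by (auto simp: subset_iff)
      have finT: "finite (T I)" if "I \<in> C" for I
        using Tsub[OF that] finite_subset by blast
      have nb: "v \<noteq> u \<and> v \<noteq> u + 1 \<and> v + 1 \<noteq> u"
        if IJ: "I \<in> C" "J \<in> C" "I \<noteq> J" and u: "u \<in> dstar L I" and v: "v \<in> dstar L J" for I J u v
      proof -
        have ur: "2 \<le> u" "u \<le> L - 2" using Drange[OF IJ(1)] u by auto
        have "(u + 1) mod L = u + 1" using ur assms(1) by simp
        moreover have "(u + L - 1) mod L = u - 1"
        proof -
          have e: "u + L - 1 = (u - 1) + L" using ur by simp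
          have "(u + L - 1) mod L = ((u - 1) + L) mod L" by (simp only: e)
          also have "\<dots> = (u - 1) mod L" by (rule mod_add_self2)
          also have "\<dots> = u - 1" using ur assms(1) by (intro mod_less) linarith
          finally show ?thesis .
        qed
        moreover have "u \<in> shift_closure L (dstar L I)" "(u + 1) mod L \<in> shift_closure L (dstar L I)"
          "(u + L - 1) mod L \<in> shift_closure L (dstar L I)"
          unfolding shift_closure_def using u by blast+
        ultimately have "{u, u+1, u-1} \<subseteq> shift_closure L (dstar L I)" by simp
        moreover have "v \<in> dset L J" using v unfolding dstar_def by blast
        ultimately have "v \<notin> {u, u+1, u-1}" using cond[OF IJ] by blast
        then show ?thesis using ur by auto
      qed
      have disj: "T I \<inter> T J = {}" if IJ: "I \<in> C" "J \<in> C" "I \<noteq> J" for I J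
      proof (rule ccontr)
        assume "T I \<inter> T J \<noteq> {}"
        then obtain w where "w \<in> T I" "w \<in> T J" by blast
        then obtain u v where u: "u \<in> dstar L I" "w = u \<or> w = Suc u"
          and v: "v \<in> dstar L J" "w = v \<or> w = Suc v" unfolding T_def by blast
        show False using nb[OF IJ u(1) v(1)] u(2) v(2) by auto
      qed
      have "card (\<Union>I\<in>C. T I) = (\<Sum>I\<in>C. card (T I))"
        by (rule card_UN_disjoint[OF finC]) (use finT disj in auto)
      moreover have "card (\<Union>I\<in>C. T I) \<le> card {2..<L}"
        using Tsub by (intro card_mono) auto
      ultimately have sumT: "(\<Sum>I\<in>C. card (T I)) \<le> L - 2" by simp
      define A3 where "A3 = {I \<in> C. card (T I) < 8 \<and> L div 3 \<in> T I}"
      define A4 where "A4 = {I \<in> C. card (T I) < 8 \<and> L div 3 \<notin> T I}"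
      have A4p: "4 dvd L \<and> L div 4 \<in> T I \<and> 6 \<le> card (T I)" if "I \<in> A4" for I
      proof -
        have "I \<in> C" "card (T I) < 8" "L div 3 \<notin> T I" using that unfolding A4_def by auto
        then show ?thesis using goodT[of I] unfolding good_def by auto
      qed
      have cA3: "card A3 \<le> 1"
      proof -
        have "finite A3" using finC unfolding A3_def by simp
        moreover have "\<forall>I\<in>A3. \<forall>J\<in>A3. I = J"
        proof (intro ballI)
          fix I J assume "I \<in> A3" "J \<in> A3"
          then have IJ: "I \<in> C" "J \<in> C" "L div 3 \<in> T I" "L div 3 \<in> T J" unfolding A3_def by auto
          then show "I = J" using disj[OF IJ(1,2)] by blast
        qed
        ultimately show ?thesis by (simp add: card_le_Suc0_iff_eq)
      qed
      have cA4: "card A4 \<le> (if 4 dvd L then 1 else 0)"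
      proof (cases "4 dvd L")
        case True
        have "finite A4" using finC unfolding A4_def by simp
        moreover have "\<forall>I\<in>A4. \<forall>J\<in>A4. I = J"
        proof (intro ballI)
          fix I J assume "I \<in> A4" "J \<in> A4"
          then have IJ: "I \<in> C" "J \<in> C" unfolding A4_def by auto
          have "L div 4 \<in> T I" "L div 4 \<in> T J" using A4p \<open>I \<in> A4\<close> \<open>J \<in> A4\<close> by auto
          then show "I = J" using disj[OF IJ] by blast
        qed
        ultimately show ?thesis using True by (simp add: card_le_Suc0_iff_eq)
      next
        case False
        then have "A4 = {}" using A4p by blast
        then show ?thesis by simp
      qed
      define d3 where "d3 = (if 3 dvd L then 4 else (2::nat))"
      define g where "g I = (if I \<in> A3 then d3 else 0) + (if I \<in> A4 then 2 else 0)" for I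
      have eight: "8 \<le> card (T I) + g I" if "I \<in> C" for I
      proof (cases "card (T I) < 8")
        case True
        show ?thesis
        proof (cases "L div 3 \<in> T I")
          case True2: True
          then have "I \<in> A3" using that True unfolding A3_def by blast
          moreover have "8 \<le> card (T I) + d3"
          proof -
            have G: "8 \<le> card (T I) \<or> (if 3 dvd L then 4 else 6) \<le> card (T I) \<or> 6 \<le> card (T I)"
              using goodT[OF that] unfolding good_def by blast
            have h1: "8 \<le> (if 3 dvd L then 4 else 6) + d3" and h2: "2 \<le> d3"
              unfolding d3_def by simp_all
            from G show ?thesis
            proof (elim disjE)
              assume "8 \<le> card (T I)" thus ?thesis by simp
            next
              assume "(if 3 dvd L then 4 else 6) \<le> card (T I)" thus ?thesis using h1 by linarith
            next
              assume "6 \<le> card (T I)" thus ?thesis using h2 by linarith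
            qed
          qed
          ultimately show ?thesis unfolding g_def by simp
        next
          case False
          then have "I \<in> A4" using that True unfolding A4_def by blast
          then show ?thesis using A4p[of I] unfolding g_def by simp
        qed
      next
        case False then show ?thesis by simp
      qed
      have "8 * card C = (\<Sum>I\<in>C. 8)" by simp
      also have "\<dots> \<le> (\<Sum>I\<in>C. card (T I) + g I)" using eight by (intro sum_mono) auto
      also have "\<dots> = (\<Sum>I\<in>C. card (T I)) + (\<Sum>I\<in>C. g I)" by (simp add: sum.distrib)
      also have "(\<Sum>I\<in>C. g I) = d3 * card A3 + 2 * card A4"
      proof -
        have A3C: "A3 \<subseteq> C" "A4 \<subseteq> C" unfolding A3_def A4_def by auto
        show ?thesis
          by (simp only: g_def sum.distrib sum_ind[OF finC A3C(1)] sum_ind[OF finC A3C(2)])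
      qed
      finally have "8 * card C \<le> L - 2 + d3 * card A3 + 2 * card A4" using sumT by linarith
      moreover have "d3 * card A3 \<le> d3" using cA3 by simp
      moreover have "2 * card A4 \<le> (if 4 dvd L then 2 else 0)" using cA4 by (auto split: if_splits)
      ultimately have "8 * card C \<le> L - 2 + (if 3 dvd L then 4 else 2) + (if 4 dvd L then 2 else 0)"
        unfolding d3_def by linarith
      then show ?thesis using final_arith[OF assms(2,1)] unfolding b_def by blast
    qed
  qed
  define S where "S = {card C | C. is_SCAC L 3 C}"
  have "S \<subseteq> {..b}" using key unfolding S_def by auto
  then have finS: "finite S" using finite_subset by blast
  have "is_SCAC L 3 {}" unfolding is_SCAC_def by simp
  then have "S \<noteq> {}" unfolding S_def by blast
  then have "Max S \<le> b" using finS \<open>S \<subseteq> {..b}\<close> by (simp add: Max_le_iff subset_iff)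
  then show ?thesis unfolding M_S_def S_def b_def .
qed

end
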